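(* Let $\bar b>0$, $0<\epsilon<1$, and suppose $w/6\le \bar w\le 6w$. Then for every edge $e$, the expected number of queries and the expected running time of $\mathrm{Heavy}(e,\bar b,\bar w,\epsilon,m)$ are $O\!\left(\frac{\bar w\sqrt m}{\bar b}\cdot \mathrm{poly}(\log n,1/\epsilon)\right)$.
   Context: Let $G=(V,E)$ be a bipartite graph with bipartition $V=U\cup L$, $n=|V|$, $m=|E|$; $N(v)$ is the neighbor set and $d_v=|N(v)|$ the degree of $v$; for an edge $e=(u,v)$, $d_e=d_u+d_v-2$; $w$ is the number of wedges (paths with two edges) in $G$. A butterfly is a set of four distinct vertices $\{u_1,u_2,v_1,v_2\}$, $u_i\in U$, $v_i\in L$, with all four pairs $u_iv_j$ edges. Fix an arbitrary order $\pi$ of $V$ and write $x\prec z$ if $d_x<d_z$, or $d_x=d_z$ and $x$ precedes $z$ in $\pi$. Access to $G$ is via degree queries, neighbor queries (the $i$-th neighbor of $v$), vertex-pair queries and uniform edge sampling, each costing one query. Procedure $\mathrm{Heavy}(e=(u,v),\bar b,\bar w,\epsilon,m)$: if $\bar w<(\epsilon\bar b)^{1/4}d_e$, return heavy. Otherwise, for $i=1,\dots,t=48\log(2m)$: for $j=1,\dots,s=12\sqrt m\,\bar w/(\epsilon^2\bar b)$: choose $p\in\{u,v\}$ with probability $(d_p-1)/d_e$, let $q$ be the other endpoint of $e$, choose $x_j$ uniformly from $N(p)\setminus\{q\}$ (wedge $(q,p,x_j)$); let $y_j$ be the one of $q,x_j$ with smaller degree; set $R=\lceil d_{y_j}/\sqrt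 m\rceil$; for $k=1,\dots,R$ sample $z$ uniformly from $N(y_j)$ and set $Z_k=d_{y_j}$ if $\{q,p,x_j,z\}$ is a butterfly and $x_j\prec z$, else $Z_k=0$; set $Y_j=\frac1R\sum_kZ_k$. Set $X_i=\frac1s\sum_jY_j$. Return heavy if the median $X$ of the $X_i$ exceeds $\bar b^{3/4}/\epsilon^{1/4}$, light otherwise. *)

theory Defs
  imports "HOL-Probability.Probability"
begin

definition bipartite_graph :: "'v set \<Rightarrow> 'v set \<Rightarrow> 'v set \<Rightarrow> 'v set set \<Rightarrow> bool" where
  "bipartite_graph V U L E \<longleftrightarrow> finite V \<and> U \<union> L = V \<and> U \<inter> L = {} \<and>
     (\<forall>e\<in>E. \<exists>a\<in>U. \<exists>b\<in>L. e = {a, b})"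

definition nbrs :: "'v set set \<Rightarrow> 'v \<Rightarrow> 'v set" where
  "nbrs E x = {y. {x, y} \<in> E}"

definition deg :: "'v set set \<Rightarrow> 'v \<Rightarrow> nat" where
  "deg E x = card (nbrs E x)"

definition wedges :: "'v set \<Rightarrow> 'v set set \<Rightarrow> nat" where
  "wedges V E = (\<Sum>x\<in>V. deg E x choose 2)"

definition is_butterfly :: "'v set \<Rightarrow> 'v set \<Rightarrow> 'v set set \<Rightarrow> 'v set \<Rightarrow> bool" where
  "is_butterfly U L E S \<longleftrightarrow> (\<exists>u1 u2 v1 v2. S = {u1, u2, v1, v2} \<and> u1 \<noteq> u2 \<and> v1 \<noteq> v2 \<and>
     u1 \<in> U \<and> u2 \<in> U \<and> v1 \<in> L \<and> v2 \<in> L \<and>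
     {u1, v1} \<in> E \<and> {u1, v2} \<in> E \<and> {u2, v1} \<in> E \<and> {u2, v2} \<in> E)"

text \<open>The order x \<prec> z, with the arbitrary order \<rk> of V given by an injective ranking rk.\<close>
definition prec :: "'v set set \<Rightarrow> ('v \<Rightarrow> nat) \<Rightarrow> 'v \<Rightarrow> 'v \<Rightarrow> bool" where
  "prec E rk x z \<longleftrightarrow> deg E x < deg E z \<or> (deg E x = deg E z \<and> rk x < rk z)"

text \<open>Every random step yields a triple (value, number of queries, running time).\<close>

fun iter_pmf :: "nat \<Rightarrow> 'a pmf \<Rightarrow> 'a list pmf" where
  "iter_pmf 0 p = return_pmf []"
| "iter_pmf (Suc k) p = bind_pmf p (\<lambda>x. map_pmf (Cons x) (iter_pmf k p))"

definition sum_q :: "('a \<times> nat \<times> nat) list \<Rightarrow> nat" where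
  "sum_q xs = sum_list (map (\<lambda>(_, q, _). q) xs)"

definition sum_t :: "('a \<times> nat \<times> nat) list \<Rightarrow> nat" where
  "sum_t xs = sum_list (map (\<lambda>(_, _, t). t) xs)"

definition median :: "real list \<Rightarrow> real" where
  "median xs = sort xs ! (length xs div 2)"

text \<open>One sample Z_k: a neighbor query for z, a degree query for d_z and a vertex-pair
  query (adjacency of z to the other vertex of {q, x}): 3 queries, 1 unit of time.\<close>
definition Z_sample :: "'v set \<Rightarrow> 'v set \<Rightarrow> 'v set set \<Rightarrow> ('v \<Rightarrow> nat) \<Rightarrow>
    'v \<Rightarrow> 'v \<Rightarrow> 'v \<Rightarrow> 'v \<Rightarrow> (real \<times> nat \<times> nat) pmf" where
  "Z_sample U L E rk q p x y =
     map_pmf (\<lambda>z. (if is_butterfly U L E {q, p, x, z} \<and> prec E rk x z then real (deg E y) else 0,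
                    3, 1))
       (pmf_of_set (nbrs E y))"

text \<open>One sample Y_j for the edge e = (u,v): a neighbor query for x_j and a degree query for
  d_{x_j} (2 queries), then R samples Z_k.\<close>
definition Y_sample :: "'v set \<Rightarrow> 'v set \<Rightarrow> 'v set set \<Rightarrow> ('v \<Rightarrow> nat) \<Rightarrow> nat \<Rightarrow>
    'v \<Rightarrow> 'v \<Rightarrow> (real \<times> nat \<times> nat) pmf" where
  "Y_sample U L E rk m u v =
    (let de = deg E u + deg E v - 2 in
     if de = 0 then return_pmf (0, 0, 1) else
     bind_pmf (bernoulli_pmf (real (deg E u - 1) / real de)) (\<lambda>b.
       let p = (if b then u else v); q = (if b then v else u) in
       if nbrs E p - {q} = {} then return_pmf (0, 0, 1) else
       bind_pmf (pmf_of_set (nbrs E p - {q})) (\<lambda>x.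
         let y = (if deg E x < deg E q then x else q);
             R = nat \<lceil>real (deg E y) / sqrt (real m)\<rceil> in
         map_pmf (\<lambda>zs. (sum_list (map fst zs) / real R, 2 + sum_q zs, 1 + sum_t zs))
           (iter_pmf R (Z_sample U L E rk q p x y)))))"

definition X_sample :: "'v set \<Rightarrow> 'v set \<Rightarrow> 'v set set \<Rightarrow> ('v \<Rightarrow> nat) \<Rightarrow> nat \<Rightarrow> nat \<Rightarrow>
    'v \<Rightarrow> 'v \<Rightarrow> (real \<times> nat \<times> nat) pmf" where
  "X_sample U L E rk m s u v =
     map_pmf (\<lambda>ys. (sum_list (map fst ys) / real s, sum_q ys, 1 + sum_t ys))
       (iter_pmf s (Y_sample U L E rk m u v))"

text \<open>Heavy(e=(u,v), bbar, wbar, eps, m): returns (True = heavy / False = light,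
  number of queries, running time).  Two degree queries for d_u, d_v; the median of t values
  is charged t units of time.\<close>
definition Heavy :: "'v set \<Rightarrow> 'v set \<Rightarrow> 'v set set \<Rightarrow> ('v \<Rightarrow> nat) \<Rightarrow>
    'v \<Rightarrow> 'v \<Rightarrow> real \<Rightarrow> real \<Rightarrow> real \<Rightarrow> nat \<Rightarrow> (bool \<times> nat \<times> nat) pmf" where
  "Heavy U L E rk u v bbar wbar eps m =
    (let de = deg E u + deg E v - 2 in
     if wbar < (eps * bbar) powr (1/4) * real de then return_pmf (True, 2, 1) else
     (let t = nat \<lceil>48 * log 2 (2 * real m)\<rceil>;
          s = nat \<lceil>12 * sqrt (real m) * wbar / (eps ^ 2 * bbar)\<rceil> in
      map_pmf (\<lambda>xs. (median (map fst xs) > bbar powr (3/4) / eps powr (1/4),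
                      2 + sum_q xs, 1 + t + sum_t xs))
        (iter_pmf t (X_sample U L E rk m s u v))))"

end

theory Submission
  imports Defs "HOL-Analysis.Harmonic_Numbers"
begin

definition cst :: "('a \<times> nat \<times> nat) \<Rightarrow> real" where
  "cst = (\<lambda>(_, q, t). real q + real t)"

lemma cst_sum: "real (sum_q xs) + real (sum_t xs) = sum_list (map cst xs)"
  by (induction xs) (auto simp: sum_q_def sum_t_def cst_def)

lemma iter_exp:
  fixes f :: "'a \<Rightarrow> real"
  assumes fin: "finite (set_pmf p)"
  shows "finite (set_pmf (iter_pmf k p)) \<and>
    measure_pmf.expectation (iter_pmf k p) (\<lambda>xs. c + sum_list (map f xs)) =
      c + real k * measure_pmf.expectation p f"
proof (induction k arbitrary: c)
  case 0
  then show ?case by simp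
next
  case (Suc k)
  have f1: "finite (set_pmf (iter_pmf (Suc k) p))"
    using Suc fin by (simp add: set_bind_pmf)
  have "measure_pmf.expectation (iter_pmf (Suc k) p) (\<lambda>xs. c + sum_list (map f xs)) =
     (\<Sum>a\<in>set_pmf p. pmf p a *\<^sub>R measure_pmf.expectation (map_pmf (Cons a) (iter_pmf k p))
          (\<lambda>xs. c + sum_list (map f xs)))"
    unfolding iter_pmf.simps
    by (rule pmf_expectation_bind) (use fin Suc in auto)
  also have "\<dots> = (\<Sum>a\<in>set_pmf p. pmf p a * (c + real k * measure_pmf.expectation p f)
                      + pmf p a * f a)"
  proof (rule sum.cong)
    fix a assume "a \<in> set_pmf p"
    have "measure_pmf.expectation (map_pmf (Cons a) (iter_pmf k p)) (\<lambda>xs. c + sum_list (map f xs))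
       = measure_pmf.expectation (iter_pmf k p) (\<lambda>xs. (c + f a) + sum_list (map f xs))"
      by (simp add: add.assoc)
    also have "\<dots> = c + f a + real k * measure_pmf.expectation p f"
      using Suc.IH[of "c + f a"] by simp
    finally show "pmf p a *\<^sub>R measure_pmf.expectation (map_pmf (Cons a) (iter_pmf k p))
          (\<lambda>xs. c + sum_list (map f xs)) = pmf p a * (c + real k * measure_pmf.expectation p f)
                      + pmf p a * f a"
      by (simp add: algebra_simps)
  qed simp
  also have "\<dots> = (c + real k * measure_pmf.expectation p f) * (\<Sum>a\<in>set_pmf p. pmf p a)
       + (\<Sum>a\<in>set_pmf p. pmf p a * f a)"
    by (simp add: sum.distrib sum_distrib_left mult.commute[of _ "c + _"])
  also have "(\<Sum>a\<in>set_pmf p. pmf p a) = 1"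
    using fin by (rule sum_pmf_eq_1) simp
  also have "(\<Sum>a\<in>set_pmf p. pmf p a * f a) = measure_pmf.expectation p f"
    by (subst integral_measure_pmf[OF fin]) auto
  finally show ?case using f1 by (simp add: algebra_simps)
qed


lemma bip_edge:
  assumes "bipartite_graph V U L E" "{a, b} \<in> E"
  shows "(a \<in> U \<and> b \<in> L \<or> a \<in> L \<and> b \<in> U) \<and> a \<in> V \<and> b \<in> V \<and> a \<noteq> b"
proof -
  obtain c d where "c \<in> U" "d \<in> L" "{a, b} = {c, d}"
    using assms unfolding bipartite_graph_def by blast
  moreover have "U \<inter> L = {}" "U \<union> L = V" using assms unfolding bipartite_graph_def by auto
  moreover have "(a = c \<and> b = d) \<or> (a = d \<and> b = c)" using \<open>{a, b} = {c, d}\<close>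
    by (simp add: doubleton_eq_iff)
  ultimately show ?thesis by auto
qed

lemma nbrs_sub: "bipartite_graph V U L E \<Longrightarrow> nbrs E x \<subseteq> V"
proof
  fix y assume "bipartite_graph V U L E" "y \<in> nbrs E x"
  then show "y \<in> V" using bip_edge[of V U L E x y] unfolding nbrs_def by simp
qed

lemma nbrs_fin: "bipartite_graph V U L E \<Longrightarrow> finite (nbrs E x)"
proof -
  assume b: "bipartite_graph V U L E"
  then have "finite V" by (simp add: bipartite_graph_def)
  then show ?thesis using nbrs_sub[OF b] by (rule finite_subset[rotated])
qed

lemma E_sub:
  assumes b: "bipartite_graph V U L E"
  shows "E \<subseteq> (\<lambda>(a, b). {a, b}) ` (V \<times> V)"
proof
  fix e assume "e \<in> E"
  then obtain c d where "c \<in> U" "d \<in> L" "e = {c, d}"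
    using b unfolding bipartite_graph_def by blast
  moreover have "U \<union> L = V" using b unfolding bipartite_graph_def by simp
  ultimately show "e \<in> (\<lambda>(a, b). {a, b}) ` (V \<times> V)"
    by (intro image_eqI[where x="(c, d)"]) auto
qed

lemma E_fin: "bipartite_graph V U L E \<Longrightarrow> finite E"
proof -
  assume b: "bipartite_graph V U L E"
  then have "finite V" by (simp add: bipartite_graph_def)
  then have "finite ((\<lambda>(a, b). {a, b}) ` (V \<times> V))" by simp
  then show ?thesis using E_sub[OF b] by (rule finite_subset[rotated])
qed

lemma card_E_le: "bipartite_graph V U L E \<Longrightarrow> card E \<le> card V ^ 2"
proof -
  assume b: "bipartite_graph V U L E"
  then have fV: "finite V" by (simp add: bipartite_graph_def)
  have "card E \<le> card ((\<lambda>(a, b). {a, b}) ` (V \<times> V))"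
    by (rule card_mono) (use E_sub[OF b] fV in auto)
  also have "\<dots> \<le> card (V \<times> V)" by (rule card_image_le) (use fV in auto)
  finally show ?thesis by (simp add: card_cartesian_product power2_eq_square)
qed

lemma sum_deg_nbrs:
  assumes b: "bipartite_graph V U L E"
  shows "(\<Sum>x\<in>nbrs E p. deg E x) \<le> card E"
proof -
  have "(\<Sum>x\<in>nbrs E p. deg E x) = card (Sigma (nbrs E p) (nbrs E))"
    unfolding deg_def by (rule card_SigmaI[symmetric]) (use nbrs_fin[OF b] in auto)
  also have "\<dots> \<le> card E"
  proof (rule card_inj_on_le[where f = "\<lambda>(x, y). {x, y}"])
    show "inj_on (\<lambda>(x, y). {x, y}) (Sigma (nbrs E p) (nbrs E))"
    proof (rule inj_onI, clarify)
      fix x y x' y'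
      assume h: "x \<in> nbrs E p" "y \<in> nbrs E x" "x' \<in> nbrs E p" "y' \<in> nbrs E x'" "{x, y} = {x', y'}"
      show "x = x' \<and> y = y'"
      proof (rule ccontr)
        assume "\<not> (x = x' \<and> y = y')"
        then have "x \<noteq> x'" "{x, x'} \<in> E" using h unfolding nbrs_def doubleton_eq_iff by auto
        moreover have "{p, x} \<in> E" "{p, x'} \<in> E" using h unfolding nbrs_def by auto
        moreover have "U \<inter> L = {}" using b unfolding bipartite_graph_def by blast
        ultimately show False using bip_edge[OF b, of x x'] bip_edge[OF b, of p x] bip_edge[OF b, of p x']
          by blast
      qed
    qed
    show "(\<lambda>(x, y). {x, y}) ` Sigma (nbrs E p) (nbrs E) \<subseteq> E"
      unfolding nbrs_def by auto
    show "finite E" using E_fin[OF b] .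
  qed
  finally show ?thesis .
qed


definition Rfun :: "'v set set \<Rightarrow> nat \<Rightarrow> 'v \<Rightarrow> 'v \<Rightarrow> nat" where
  "Rfun E m q x = nat \<lceil>real (deg E (if deg E x < deg E q then x else q)) / sqrt (real m)\<rceil>"

definition Yin :: "'v set \<Rightarrow> 'v set \<Rightarrow> 'v set set \<Rightarrow> ('v \<Rightarrow> nat) \<Rightarrow> nat \<Rightarrow>
    'v \<Rightarrow> 'v \<Rightarrow> 'v \<Rightarrow> (real \<times> nat \<times> nat) pmf" where
  "Yin U L E rk m q p x =
     (let y = (if deg E x < deg E q then x else q);
          R = nat \<lceil>real (deg E y) / sqrt (real m)\<rceil> in
      map_pmf (\<lambda>zs. (sum_list (map fst zs) / real R, 2 + sum_q zs, 1 + sum_t zs))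
        (iter_pmf R (Z_sample U L E rk q p x y)))"

definition Yb :: "'v set \<Rightarrow> 'v set \<Rightarrow> 'v set set \<Rightarrow> ('v \<Rightarrow> nat) \<Rightarrow> nat \<Rightarrow>
    'v \<Rightarrow> 'v \<Rightarrow> (real \<times> nat \<times> nat) pmf" where
  "Yb U L E rk m p q = (if nbrs E p - {q} = {} then return_pmf (0, 0, 1) else
       bind_pmf (pmf_of_set (nbrs E p - {q})) (Yin U L E rk m q p))"

lemma Y_alt:
  "Y_sample U L E rk m u v =
    (if deg E u + deg E v - 2 = 0 then return_pmf (0, 0, 1) else
     bind_pmf (bernoulli_pmf (real (deg E u - 1) / real (deg E u + deg E v - 2)))
       (\<lambda>b. if b then Yb U L E rk m u v else Yb U L E rk m v u))"
  unfolding Y_sample_def Yb_def Yin_def Let_def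
  apply (rule if_cong[OF refl refl])
  apply (rule bind_pmf_cong[OF refl])
  apply (case_tac x)
   apply (simp only: if_True)
  apply (simp only: if_False)
  done

lemma Z_fin: "finite (set_pmf (Z_sample U L E rk q p x y))"
proof -
  have "set_pmf (Z_sample U L E rk q p x y) \<subseteq> {(real (deg E y), 3, 1), (0, 3, 1)}"
    unfolding Z_sample_def by auto
  then show ?thesis by (rule finite_subset) simp
qed

lemma Z_exp: "measure_pmf.expectation (Z_sample U L E rk q p x y) cst = 4"
  unfolding Z_sample_def by (simp add: cst_def)

lemma Yin_exp:
  "finite (set_pmf (Yin U L E rk m q p x)) \<and>
   measure_pmf.expectation (Yin U L E rk m q p x) cst = 3 + 4 * real (Rfun E m q x)"
proof -
  let ?y = "if deg E x < deg E q then x else q"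
  let ?R = "Rfun E m q x"
  have eq: "Yin U L E rk m q p x = map_pmf (\<lambda>zs. (sum_list (map fst zs) / real ?R, 2 + sum_q zs, 1 + sum_t zs))
        (iter_pmf ?R (Z_sample U L E rk q p x ?y))"
    unfolding Yin_def Rfun_def Let_def ..
  have it: "finite (set_pmf (iter_pmf ?R (Z_sample U L E rk q p x ?y))) \<and>
    measure_pmf.expectation (iter_pmf ?R (Z_sample U L E rk q p x ?y)) (\<lambda>xs. 3 + sum_list (map cst xs)) =
      3 + real ?R * measure_pmf.expectation (Z_sample U L E rk q p x ?y) cst"
    by (rule iter_exp[OF Z_fin])
  have "measure_pmf.expectation (Yin U L E rk m q p x) cst =
      measure_pmf.expectation (iter_pmf ?R (Z_sample U L E rk q p x ?y)) (\<lambda>xs. 3 + sum_list (map cst xs))"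
    unfolding eq integral_map_pmf
    by (intro Bochner_Integration.integral_cong refl) (simp only: cst_sum[symmetric], simp add: cst_def)
  moreover have "finite (set_pmf (Yin U L E rk m q p x))"
    using it unfolding eq set_map_pmf by (meson finite_imageI)
  ultimately show ?thesis using it unfolding Z_exp by simp
qed


lemma key_ineq:
  fixes S a b r :: real
  assumes r: "r \<ge> 1" and s1: "S \<le> r^2" and s2: "S \<le> a*(b+1)" and a: "a \<ge> 0" and b: "b \<ge> 0"
    and a01: "a = 0 \<or> a \<ge> 1"
  shows "S \<le> r*(a+b)"
proof (cases "r \<le> a + b")
  case True
  have "r^2 = r * r" by (simp add: power2_eq_square)
  also have "\<dots> \<le> r * (a + b)" using True r by (intro mult_left_mono) auto
  finally show ?thesis using s1 by linarith
next
  case False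
  show ?thesis
  proof (cases "a = 0")
    case True
    have "0 \<le> r * b" using r b by simp
    then show ?thesis using s2 True by simp
  next
    case a0: False
    then have a1: "a \<ge> 1" using a01 by simp
    have "a * (b + 1) \<le> r * (b + 1)" using False b a by (intro mult_right_mono) auto
    also have "\<dots> \<le> r * (a + b)" using a1 r by (intro mult_left_mono) auto
    finally show ?thesis using s2 by linarith
  qed
qed

lemma Yb_exp:
  assumes b: "bipartite_graph V U L E" and e: "{p, q} \<in> E"
  shows "finite (set_pmf (Yb U L E rk m p q)) \<and>
    real (deg E p - 1) * measure_pmf.expectation (Yb U L E rk m p q) cst =
      (\<Sum>x\<in>nbrs E p - {q}. 3 + 4 * real (Rfun E m q x))"
proof -
  have qN: "q \<in> nbrs E p" using e by (simp add: nbrs_def)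
  have fin: "finite (nbrs E p - {q})" using nbrs_fin[OF b] by simp
  have card: "card (nbrs E p - {q}) = deg E p - 1"
    using qN nbrs_fin[OF b] by (simp add: deg_def card_Diff_singleton)
  show ?thesis
  proof (cases "nbrs E p - {q} = {}")
    case True
    then have "deg E p - 1 = 0" using card by (metis card.empty)
    moreover have s0: "(\<Sum>x\<in>nbrs E p - {q}. 3 + 4 * real (Rfun E m q x)) = 0"
      by (simp only: True sum.empty)
    moreover have Yr: "Yb U L E rk m p q = return_pmf (0, 0, 1)" using True by (simp add: Yb_def)
    ultimately show ?thesis unfolding Yr s0 by simp
  next
    case False
    have Yfin: "finite (set_pmf (Yin U L E rk m q p x))" for x
      using Yin_exp[of U L E rk m q p x] by (rule conjunct1)
    have Yex: "measure_pmf.expectation (Yin U L E rk m q p x) cst = 3 + 4 * real (Rfun E m q x)" for x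
      using Yin_exp[of U L E rk m q p x] by (rule conjunct2)
    have Yb: "Yb U L E rk m p q = bind_pmf (pmf_of_set (nbrs E p - {q})) (Yin U L E rk m q p)"
      using False by (simp add: Yb_def)
    have "measure_pmf.expectation (Yb U L E rk m p q) cst =
        (\<Sum>a\<in>nbrs E p - {q}. measure_pmf.expectation (Yin U L E rk m q p a) cst /\<^sub>R real (card (nbrs E p - {q})))"
      unfolding Yb by (rule pmf_expectation_bind_pmf_of_set) (use False fin Yfin in auto)
    also have "\<dots> = (\<Sum>a\<in>nbrs E p - {q}. (3 + 4 * real (Rfun E m q a)) / real (deg E p - 1))"
      using card by (simp add: Yex divide_inverse mult.commute)
    also have "\<dots> = (\<Sum>a\<in>nbrs E p - {q}. 3 + 4 * real (Rfun E m q a)) / real (deg E p - 1)"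
      by (simp add: sum_divide_distrib)
    finally have ex: "measure_pmf.expectation (Yb U L E rk m p q) cst =
        (\<Sum>a\<in>nbrs E p - {q}. 3 + 4 * real (Rfun E m q a)) / real (deg E p - 1)" .
    have pos: "deg E p - 1 > 0" using False fin card by (metis card_gt_0_iff)
    have "finite (set_pmf (Yb U L E rk m p q))"
      unfolding Yb using False fin Yfin by (simp add: set_bind_pmf)
    then show ?thesis using ex pos by simp
  qed
qed

lemma T_bound:
  assumes b: "bipartite_graph V U L E" and e: "{p, q} \<in> E" and m: "m = card E"
  shows "(\<Sum>x\<in>nbrs E p - {q}. 3 + 4 * real (Rfun E m q x))
           \<le> 7 * real (deg E p - 1) + 4 * real (deg E p + deg E q - 2)"
proof -
  let ?S = "nbrs E p - {q}"
  define dy where "dy x = real (deg E (if deg E x < deg E q then x else q))" for x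
  have qN: "q \<in> nbrs E p" using e by (simp add: nbrs_def)
  have pN: "p \<in> nbrs E q" using e by (simp add: nbrs_def insert_commute)
  have finN: "finite (nbrs E p)" using nbrs_fin[OF b] .
  have fin: "finite ?S" using finN by simp
  have card: "card ?S = deg E p - 1"
    using qN finN by (simp add: deg_def card_Diff_singleton)
  have dp: "deg E p \<ge> 1" using qN finN unfolding deg_def
    by (metis One_nat_def Suc_leI card_gt_0_iff empty_iff)
  have dq: "deg E q \<ge> 1" using pN nbrs_fin[OF b, of q] unfolding deg_def
    by (metis One_nat_def Suc_leI card_gt_0_iff empty_iff)
  have m1: "m \<ge> 1" using e E_fin[OF b] m by (metis One_nat_def Suc_leI card_gt_0_iff empty_iff)
  define r where "r = sqrt (real m)"
  have r1: "r \<ge> 1" using m1 by (simp add: r_def)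
  have r2: "r^2 = real m" by (simp add: r_def)
  have dy0: "dy x \<ge> 0" for x by (simp add: dy_def)
  have R: "real (Rfun E m q x) \<le> dy x / r + 1" for x
  proof -
    have "dy x / r \<ge> 0" using dy0 r1 by simp
    then have "real (Rfun E m q x) = of_int \<lceil>dy x / r\<rceil>"
      unfolding Rfun_def dy_def r_def by simp
    also have "\<dots> \<le> dy x / r + 1" by (rule of_int_ceiling_le_add_one)
    finally show ?thesis .
  qed
  have "(\<Sum>x\<in>?S. 3 + 4 * real (Rfun E m q x)) \<le> (\<Sum>x\<in>?S. 7 + 4 / r * dy x)"
  proof (rule sum_mono)
    fix x
    have "4 / r * dy x = 4 * (dy x / r)" by simp
    then show "3 + 4 * real (Rfun E m q x) \<le> 7 + 4 / r * dy x" using R[of x] by linarith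
  qed
  also have "\<dots> = 7 * real (deg E p - 1) + 4 / r * (\<Sum>x\<in>?S. dy x)"
    by (simp add: sum.distrib sum_distrib_left card)
  finally have T1: "(\<Sum>x\<in>?S. 3 + 4 * real (Rfun E m q x)) \<le> 7 * real (deg E p - 1) + 4 / r * (\<Sum>x\<in>?S. dy x)" .
  have Sm: "(\<Sum>x\<in>?S. dy x) \<le> r^2"
  proof -
    have "(\<Sum>x\<in>?S. dy x) \<le> (\<Sum>x\<in>?S. real (deg E x))"
      by (rule sum_mono) (simp add: dy_def)
    also have "\<dots> \<le> (\<Sum>x\<in>nbrs E p. real (deg E x))"
      by (rule sum_mono2) (use finN in auto)
    also have "\<dots> = real (\<Sum>x\<in>nbrs E p. deg E x)" by simp
    also have "\<dots> \<le> real (card E)" using sum_deg_nbrs[OF b, of p] by linarith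
    finally show ?thesis using r2 m by simp
  qed
  have Sq: "(\<Sum>x\<in>?S. dy x) \<le> real (deg E p - 1) * (real (deg E q - 1) + 1)"
  proof -
    have "(\<Sum>x\<in>?S. dy x) \<le> of_nat (card ?S) * real (deg E q)"
      by (rule sum_bounded_above) (simp add: dy_def)
    then show ?thesis using card dq by (simp add: of_nat_diff)
  qed
  have key: "(\<Sum>x\<in>?S. dy x) \<le> r * (real (deg E p - 1) + real (deg E q - 1))"
    by (rule key_ineq[OF r1 Sm Sq]) (use dp in auto)
  have "4 / r * (\<Sum>x\<in>?S. dy x) \<le> 4 / r * (r * (real (deg E p - 1) + real (deg E q - 1)))"
    using key r1 by (intro mult_left_mono) auto
  also have "\<dots> = 4 * real (deg E p + deg E q - 2)" using r1 dp dq by (simp add: of_nat_diff)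
  finally show ?thesis using T1 by linarith
qed


lemma deg_pos:
  assumes b: "bipartite_graph V U L E" and e: "{p, q} \<in> E"
  shows "deg E p \<ge> 1"
proof -
  have qN: "q \<in> nbrs E p" using e by (simp add: nbrs_def)
  then show ?thesis using nbrs_fin[OF b, of p] unfolding deg_def
    by (metis One_nat_def Suc_leI card_gt_0_iff empty_iff)
qed

lemma Y_bound:
  assumes b: "bipartite_graph V U L E" and e: "{u, v} \<in> E" and m: "m = card E"
  shows "finite (set_pmf (Y_sample U L E rk m u v)) \<and>
         measure_pmf.expectation (Y_sample U L E rk m u v) cst \<le> 15"
proof (cases "deg E u + deg E v - 2 = 0")
  case True
  then show ?thesis by (simp add: Y_alt cst_def)
next
  case False
  have e': "{v, u} \<in> E" using e by (simp add: insert_commute)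
  have du: "deg E u \<ge> 1" using deg_pos[OF b e] .
  have dv: "deg E v \<ge> 1" using deg_pos[OF b e'] .
  define de where "de = real (deg E u + deg E v - 2)"
  have de_eq: "de = real (deg E u - 1) + real (deg E v - 1)"
    using du dv unfolding de_def by (simp add: of_nat_diff)
  have de_pos: "de > 0" using False unfolding de_def by simp
  define P where "P = real (deg E u - 1) / de"
  have P0: "0 \<le> P" and P1: "P \<le> 1" using de_eq de_pos unfolding P_def by auto
  have P1': "1 - P = real (deg E v - 1) / de" using de_eq de_pos unfolding P_def by (simp add: field_simps)
  define f where "f = (\<lambda>b. if b then Yb U L E rk m u v else Yb U L E rk m v u)"
  have Y: "Y_sample U L E rk m u v = bind_pmf (bernoulli_pmf P) f"
    using False unfolding Y_alt P_def de_def f_def by simp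
  have A: "finite (set_pmf (Yb U L E rk m u v)) \<and>
    real (deg E u - 1) * measure_pmf.expectation (Yb U L E rk m u v) cst =
      (\<Sum>x\<in>nbrs E u - {v}. 3 + 4 * real (Rfun E m v x))" by (rule Yb_exp[OF b e])
  have B: "finite (set_pmf (Yb U L E rk m v u)) \<and>
    real (deg E v - 1) * measure_pmf.expectation (Yb U L E rk m v u) cst =
      (\<Sum>x\<in>nbrs E v - {u}. 3 + 4 * real (Rfun E m u x))" by (rule Yb_exp[OF b e'])
  have TA: "(\<Sum>x\<in>nbrs E u - {v}. 3 + 4 * real (Rfun E m v x)) \<le> 7 * real (deg E u - 1) + 4 * de"
    using T_bound[OF b e m] unfolding de_def .
  have TB: "(\<Sum>x\<in>nbrs E v - {u}. 3 + 4 * real (Rfun E m u x)) \<le> 7 * real (deg E v - 1) + 4 * de"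
    using T_bound[OF b e' m] unfolding de_def by (simp add: add.commute)
  have finf: "finite (set_pmf (f x))" for x using A B unfolding f_def by simp
  have "measure_pmf.expectation (Y_sample U L E rk m u v) cst =
      (\<Sum>a\<in>UNIV. pmf (bernoulli_pmf P) a *\<^sub>R measure_pmf.expectation (f a) cst)"
    unfolding Y by (rule pmf_expectation_bind) (use finf in auto)
  also have "\<dots> = P * measure_pmf.expectation (Yb U L E rk m u v) cst
                 + (1 - P) * measure_pmf.expectation (Yb U L E rk m v u) cst"
    using P0 P1 by (simp add: UNIV_bool f_def)
  also have "\<dots> = ((\<Sum>x\<in>nbrs E u - {v}. 3 + 4 * real (Rfun E m v x))
                   + (\<Sum>x\<in>nbrs E v - {u}. 3 + 4 * real (Rfun E m u x))) / de"
  proof -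
    have A2: "real (deg E u - 1) * measure_pmf.expectation (Yb U L E rk m u v) cst =
      (\<Sum>x\<in>nbrs E u - {v}. 3 + 4 * real (Rfun E m v x))" using A by (rule conjunct2)
    have B2: "real (deg E v - 1) * measure_pmf.expectation (Yb U L E rk m v u) cst =
      (\<Sum>x\<in>nbrs E v - {u}. 3 + 4 * real (Rfun E m u x))" using B by (rule conjunct2)
    have "P * measure_pmf.expectation (Yb U L E rk m u v) cst
                 + (1 - P) * measure_pmf.expectation (Yb U L E rk m v u) cst
        = (real (deg E u - 1) * measure_pmf.expectation (Yb U L E rk m u v) cst
           + real (deg E v - 1) * measure_pmf.expectation (Yb U L E rk m v u) cst) / de"
      using de_pos by (simp only: P1') (simp add: P_def add_divide_distrib)
    then show ?thesis unfolding A2 B2 .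
  qed
  also have "\<dots> \<le> (7 * real (deg E u - 1) + 4 * de + (7 * real (deg E v - 1) + 4 * de)) / de"
    using TA TB de_pos by (intro divide_right_mono) auto
  also have "\<dots> = 15" using de_eq de_pos by (simp add: field_simps)
  finally show ?thesis using finf Y by (simp add: set_bind_pmf)
qed


lemma X_bound:
  assumes b: "bipartite_graph V U L E" and e: "{u, v} \<in> E" and m: "m = card E"
  shows "finite (set_pmf (X_sample U L E rk m s u v)) \<and>
         measure_pmf.expectation (X_sample U L E rk m s u v) cst \<le> 1 + 15 * real s"
proof -
  have Yf: "finite (set_pmf (Y_sample U L E rk m u v))" using Y_bound[OF b e m] by (rule conjunct1)
  have Ye: "measure_pmf.expectation (Y_sample U L E rk m u v) cst \<le> 15"
    using Y_bound[OF b e m] by (rule conjunct2)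
  have it: "finite (set_pmf (iter_pmf s (Y_sample U L E rk m u v))) \<and>
    measure_pmf.expectation (iter_pmf s (Y_sample U L E rk m u v)) (\<lambda>xs. 1 + sum_list (map cst xs)) =
      1 + real s * measure_pmf.expectation (Y_sample U L E rk m u v) cst"
    by (rule iter_exp[OF Yf])
  have "measure_pmf.expectation (X_sample U L E rk m s u v) cst =
     measure_pmf.expectation (iter_pmf s (Y_sample U L E rk m u v)) (\<lambda>xs. 1 + sum_list (map cst xs))"
    unfolding X_sample_def integral_map_pmf
    by (intro Bochner_Integration.integral_cong refl) (simp only: cst_sum[symmetric], simp add: cst_def)
  also have "\<dots> = 1 + real s * measure_pmf.expectation (Y_sample U L E rk m u v) cst"
    using it by (rule conjunct2)
  also have "\<dots> \<le> 1 + real s * 15" using Ye by (intro add_left_mono mult_left_mono) auto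
  finally have ex: "measure_pmf.expectation (X_sample U L E rk m s u v) cst \<le> 1 + 15 * real s" by simp
  have "finite (set_pmf (X_sample U L E rk m s u v))"
    using it unfolding X_sample_def set_map_pmf by (meson finite_imageI)
  then show ?thesis using ex by simp
qed

lemma H_bound:
  fixes bbar wbar eps :: real
  assumes b: "bipartite_graph V U L E" and e: "{u, v} \<in> E" and m: "m = card E"
  defines "t \<equiv> nat \<lceil>48 * log 2 (2 * real m)\<rceil>"
      and "s \<equiv> nat \<lceil>12 * sqrt (real m) * wbar / (eps ^ 2 * bbar)\<rceil>"
  shows "finite (set_pmf (Heavy U L E rk u v bbar wbar eps m)) \<and>
         measure_pmf.expectation (Heavy U L E rk u v bbar wbar eps m) cst
            \<le> 3 + 2 * real t + 15 * real t * real s"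
proof (cases "wbar < (eps * bbar) powr (1/4) * real (deg E u + deg E v - 2)")
  case True
  then show ?thesis by (simp add: Heavy_def cst_def)
next
  case False
  have H: "Heavy U L E rk u v bbar wbar eps m =
      map_pmf (\<lambda>xs. (median (map fst xs) > bbar powr (3/4) / eps powr (1/4),
                      2 + sum_q xs, 1 + t + sum_t xs))
        (iter_pmf t (X_sample U L E rk m s u v))"
    using False unfolding Heavy_def Let_def t_def s_def by simp
  have Xf: "finite (set_pmf (X_sample U L E rk m s u v))" using X_bound[OF b e m] by (rule conjunct1)
  have Xe: "measure_pmf.expectation (X_sample U L E rk m s u v) cst \<le> 1 + 15 * real s"
    using X_bound[OF b e m] by (rule conjunct2)
  have it: "finite (set_pmf (iter_pmf t (X_sample U L E rk m s u v))) \<and>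
    measure_pmf.expectation (iter_pmf t (X_sample U L E rk m s u v)) (\<lambda>xs. (3 + real t) + sum_list (map cst xs)) =
      (3 + real t) + real t * measure_pmf.expectation (X_sample U L E rk m s u v) cst"
    by (rule iter_exp[OF Xf])
  have "measure_pmf.expectation (Heavy U L E rk u v bbar wbar eps m) cst =
     measure_pmf.expectation (iter_pmf t (X_sample U L E rk m s u v)) (\<lambda>xs. (3 + real t) + sum_list (map cst xs))"
    unfolding H integral_map_pmf
    by (intro Bochner_Integration.integral_cong refl) (simp only: cst_sum[symmetric], simp add: cst_def)
  also have "\<dots> = (3 + real t) + real t * measure_pmf.expectation (X_sample U L E rk m s u v) cst"
    using it by (rule conjunct2)
  also have "\<dots> \<le> (3 + real t) + real t * (1 + 15 * real s)" using Xe by (intro add_left_mono mult_left_mono) auto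
  finally have ex: "measure_pmf.expectation (Heavy U L E rk u v bbar wbar eps m) cst
            \<le> 3 + 2 * real t + 15 * real t * real s" by (simp add: algebra_simps)
  have "finite (set_pmf (Heavy U L E rk u v bbar wbar eps m))"
    using it unfolding H set_map_pmf by (meson finite_imageI)
  then show ?thesis using ex by simp
qed

lemma arith_final:
  fixes t s w0 lg ie :: real
  assumes t0: "0 \<le> t" and t1: "t \<le> 144*lg" and s0: "0 \<le> s" and s1: "s \<le> 13*(w0+1)*ie^2"
    and lg: "lg \<ge> 1" and w0: "w0 \<ge> 0" and ie: "ie \<ge> 1"
  shows "3 + 2*t + 15 * t * s \<le> 30000*(w0+1)*lg^2*ie^2"
proof -
  define yy where "yy = (w0+1)*ie^2"
  have Y1: "yy \<ge> 1" unfolding yy_def using w0 ie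
  proof -
    have "1 * 1 \<le> (w0+1) * ie^2" by (rule mult_mono) (use w0 ie in \<open>auto simp: one_le_power\<close>)
    then show "(w0+1) * ie^2 \<ge> 1" by simp
  qed
  have ts: "t * s \<le> (144*lg)*(13*yy)" unfolding yy_def using t0 t1 s0 s1 lg
    by (intro mult_mono) (auto simp: mult.assoc[symmetric])
  have LL: "lg \<le> lg^2" using lg by (simp add: power2_eq_square)
  have X1: "lg * yy \<le> lg^2 * yy" using LL Y1 by (intro mult_right_mono) auto
  have X2: "lg \<le> lg * yy" using mult_left_mono[of 1 yy lg] Y1 lg by simp
  have X3: "1 \<le> lg^2 * yy" using lg X1 X2 by linarith
  have "3 + 2*t + 15 * t * s \<le> 3 + 288 * lg + 28080 * (lg * yy)" using ts t1 by (simp add: algebra_simps)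
  also have "\<dots> \<le> 30000 * (lg^2 * yy)" using X1 X2 X3 by linarith
  finally show ?thesis unfolding yy_def by (simp add: algebra_simps)
qed


lemma nat_ceil_le: "x \<ge> 0 \<Longrightarrow> real (nat \<lceil>x\<rceil>) \<le> x + 1"
proof -
  assume "x \<ge> 0"
  then have "real (nat \<lceil>x\<rceil>) = of_int \<lceil>x\<rceil>" by simp
  also have "\<dots> \<le> x + 1" by (rule of_int_ceiling_le_add_one)
  finally show ?thesis .
qed

lemma t_bound:
  assumes m1: "1 \<le> m" and mn: "m \<le> n^2"
  shows "real (nat \<lceil>48 * log 2 (2 * real m)\<rceil>) \<le> 144 * (1 + ln (real n))"
proof -
  have n1: "real n \<ge> 1" using m1 mn
    by (metis One_nat_def le_trans less_one not_less of_nat_1 of_nat_le_iff power_eq_0_iff zero_power2 linorder_not_le)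
  have mpos: "real m > 0" using m1 by simp
  have lnn: "ln (real n) \<ge> 0" using n1 by simp
  have l2: "log 2 (2 * real m) = 1 + log 2 (real m)" using mpos by (simp add: log_mult)
  have "log 2 (real m) \<le> log 2 (real n ^ 2)"
    using mpos mn n1 by (subst log_le_cancel_iff) (auto simp flip: of_nat_power)
  also have "\<dots> = 2 * log 2 (real n)" using n1 by (simp add: log_nat_power)
  also have "\<dots> = 2 * (ln (real n) / ln 2)" by (simp add: log_def)
  also have "\<dots> \<le> 2 * (ln (real n) / (2/3))"
    using ln2_ge_two_thirds lnn by (intro mult_left_mono divide_left_mono) auto
  finally have lm: "log 2 (real m) \<le> 3 * ln (real n)" by simp
  have lm0: "log 2 (real m) \<ge> 0" using m1 by simp
  have "real (nat \<lceil>48 * log 2 (2 * real m)\<rceil>) \<le> 48 * log 2 (2 * real m) + 1"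
    using lm0 l2 by (intro nat_ceil_le) simp
  also have "\<dots> \<le> 144 * (1 + ln (real n))" using l2 lm lnn by simp
  finally show ?thesis .
qed


theorem lemma8:
  shows "\<exists>C (k::nat). C > 0 \<and>
    (\<forall>(V::nat set) U L E rk u v bbar wbar eps.
       bipartite_graph V U L E \<and> inj_on rk V \<and> {u, v} \<in> E \<and>
       bbar > 0 \<and> 0 < eps \<and> eps < 1 \<and>
       real (wedges V E) / 6 \<le> wbar \<and> wbar \<le> 6 * real (wedges V E) \<longrightarrow>
       (let m = card E; n = card V;
            H = Heavy U L E rk u v bbar wbar eps m;
            B = C * (wbar * sqrt (real m) / bbar + 1) * (1 + ln (real n)) ^ k * (1 / eps) ^ k in
        measure_pmf.expectation H (\<lambda>(_, q, _). real q) \<le> B \<and>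
        measure_pmf.expectation H (\<lambda>(_, _, t). real t) \<le> B))"
proof (intro exI[of _ "30000::real"] exI[of _ "2::nat"] conjI allI impI)
  show "(30000::real) > 0" by simp
  fix V :: "nat set" and U L E and rk :: "nat \<Rightarrow> nat" and u v and bbar wbar eps :: real
  assume A: "bipartite_graph V U L E \<and> inj_on rk V \<and> {u, v} \<in> E \<and>
       bbar > 0 \<and> 0 < eps \<and> eps < 1 \<and>
       real (wedges V E) / 6 \<le> wbar \<and> wbar \<le> 6 * real (wedges V E)"
  then have b: "bipartite_graph V U L E" and e: "{u, v} \<in> E" and bb: "bbar > 0"
    and ep0: "0 < eps" and ep1: "eps < 1" and wb: "real (wedges V E) / 6 \<le> wbar" by auto
  have wb0: "wbar \<ge> 0" using wb by (smt (verit) divide_nonneg_pos of_nat_0_le_iff)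
  define m where "m = card E"
  define n where "n = card V"
  define H where "H = Heavy U L E rk u v bbar wbar eps m"
  define t where "t = nat \<lceil>48 * log 2 (2 * real m)\<rceil>"
  define s where "s = nat \<lceil>12 * sqrt (real m) * wbar / (eps ^ 2 * bbar)\<rceil>"
  have HB: "finite (set_pmf H) \<and> measure_pmf.expectation H cst \<le> 3 + 2 * real t + 15 * real t * real s"
    unfolding H_def t_def s_def by (rule H_bound[OF b e m_def])
  have Hf: "finite (set_pmf H)" using HB by (rule conjunct1)
  have Hc: "measure_pmf.expectation H cst \<le> 3 + 2 * real t + 15 * real t * real s" using HB by (rule conjunct2)
  have m1: "1 \<le> m" using e E_fin[OF b] unfolding m_def by (metis One_nat_def Suc_leI card_gt_0_iff empty_iff)
  have mn: "m \<le> n^2" unfolding m_def n_def by (rule card_E_le[OF b])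
  have t1: "real t \<le> 144 * (1 + ln (real n))" unfolding t_def by (rule t_bound[OF m1 mn])
  have n1: "real n \<ge> 1" using m1 mn
    by (metis One_nat_def le_trans less_one not_less of_nat_1 of_nat_le_iff power_eq_0_iff zero_power2 linorder_not_le)
  have lg: "1 + ln (real n) \<ge> 1" using n1 by simp
  define w0 where "w0 = wbar * sqrt (real m) / bbar"
  define ie where "ie = 1 / eps"
  have w00: "w0 \<ge> 0" unfolding w0_def using wb0 bb by simp
  have ie1: "ie \<ge> 1" unfolding ie_def using ep0 ep1 by simp
  have xeq: "12 * sqrt (real m) * wbar / (eps ^ 2 * bbar) = 12 * (w0 * ie^2)"
    unfolding w0_def ie_def using ep0 bb by (simp add: field_simps power2_eq_square)
  have wi0: "w0 * ie^2 \<ge> 0" using w00 by simp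
  have "real s \<le> 12 * (w0 * ie^2) + 1" unfolding s_def xeq by (rule nat_ceil_le) (use wi0 in simp)
  also have "\<dots> \<le> 13 * (w0 + 1) * ie^2"
  proof -
    have "1 \<le> ie^2" using ie1 by (simp add: one_le_power)
    then show ?thesis using wi0 by (simp add: algebra_simps)
  qed
  finally have s1: "real s \<le> 13 * (w0 + 1) * ie^2" .
  have fin: "3 + 2 * real t + 15 * real t * real s \<le> 30000 * (w0 + 1) * (1 + ln (real n))^2 * ie^2"
    by (rule arith_final) (use t1 s1 lg w00 ie1 in auto)
  have int: "integrable (measure_pmf H) f" for f :: "_ \<Rightarrow> real"
    by (rule integrable_measure_pmf_finite[OF Hf])
  have q: "measure_pmf.expectation H (\<lambda>(_, q, _). real q) \<le> measure_pmf.expectation H cst"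
    by (rule integral_mono[OF int int]) (auto simp: cst_def split: prod.splits)
  have tt: "measure_pmf.expectation H (\<lambda>(_, _, t). real t) \<le> measure_pmf.expectation H cst"
    by (rule integral_mono[OF int int]) (auto simp: cst_def split: prod.splits)
  show "let m = card E; n = card V;
            H = Heavy U L E rk u v bbar wbar eps m;
            B = 30000 * (wbar * sqrt (real m) / bbar + 1) * (1 + ln (real n)) ^ 2 * (1 / eps) ^ 2 in
        measure_pmf.expectation H (\<lambda>(_, q, _). real q) \<le> B \<and>
        measure_pmf.expectation H (\<lambda>(_, _, t). real t) \<le> B"
    unfolding Let_def m_def[symmetric] n_def[symmetric] H_def[symmetric] w0_def[symmetric] ie_def[symmetric]
    using q tt Hc fin by linarith
qed

end
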